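(* Consider the closed-loop lumped-parameter (0D) circulation model described in the context, and let its state functions be differentiable on $(0,T)$ and satisfy the system (i)–(iii) of the context for all $t\in(0,T)$. Then for all $t\in(0,T)$, $$\frac{d}{dt}\mathcal{M}(t)=\Pi^{\mathrm{act}}(t)+\Pi^{\mathrm{diss}}(t)+\Pi^{\mathrm{ex}}(t),$$ where $\mathcal{M},\Pi^{\mathrm{act}},\Pi^{\mathrm{diss}},\Pi^{\mathrm{ex}}$ are as defined in the context.
   Context: Chamber indices $i\in\{\mathrm{LA},\mathrm{LV},\mathrm{RA},\mathrm{RV}\}$ (left/right atrium/ventricle); vascular indices $j\in\{\mathrm{AR},\mathrm{VEN}\}$, $k\in\{\mathrm{SYS},\mathrm{PUL}\}$. Positive constants $C_j^k,R_j^k,L_j^k$, constants $V_{0,i}$ and $E_i^{\mathrm{pass}}>0$, given functions $E_i^{\mathrm{act}}(t)$ and $p_{\mathrm{EX}}(t)$, and for each valve $v\in\{\mathrm{MV},\mathrm{AV},\mathrm{TV},\mathrm{PV}\}$ a resistance function $R_v(p_1,p_2)=R_{\min}$ if $p_1<p_2$ and $R_{\max}$ if $p_1\ge p_2$, with $0<R_{\min}$, $R_{\max}<\infty$. Set $E_i(t)=E_i^{\mathrm{pass}}+E_i^{\mathrm{act}}(t)$. Unknowns: volumes $V_i(t)$, pressures $p_j^k(t)$, flows $Q_j^k(t)$. (i) Algebraic relations: $p_i=p_{\mathrm{EX}}+E_i(V_i-V_{0,i})$ for each chamber $i$; $Q_{\mathrm{MV}}=\frac{p_{\mathrm{LA}}-p_{\mathrm{LV}}}{R_{\mathrm{MV}}(p_{\mathrm{LA}},p_{\mathrm{LV}})}$,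 $Q_{\mathrm{AV}}=\frac{p_{\mathrm{LV}}-p_{\mathrm{AR}}^{\mathrm{SYS}}}{R_{\mathrm{AV}}(p_{\mathrm{LV}},p_{\mathrm{AR}}^{\mathrm{SYS}})}$, $Q_{\mathrm{TV}}=\frac{p_{\mathrm{RA}}-p_{\mathrm{RV}}}{R_{\mathrm{TV}}(p_{\mathrm{RA}},p_{\mathrm{RV}})}$, $Q_{\mathrm{PV}}=\frac{p_{\mathrm{RV}}-p_{\mathrm{AR}}^{\mathrm{PUL}}}{R_{\mathrm{PV}}(p_{\mathrm{RV}},p_{\mathrm{AR}}^{\mathrm{PUL}})}$. (ii) Chamber and compliance equations: $\dot V_{\mathrm{LA}}=Q_{\mathrm{VEN}}^{\mathrm{PUL}}-Q_{\mathrm{MV}}$, $\dot V_{\mathrm{LV}}=Q_{\mathrm{MV}}-Q_{\mathrm{AV}}$, $\dot V_{\mathrm{RA}}=Q_{\mathrm{VEN}}^{\mathrm{SYS}}-Q_{\mathrm{TV}}$, $\dot V_{\mathrm{RV}}=Q_{\mathrm{TV}}-Q_{\mathrm{PV}}$; $C_{\mathrm{AR}}^{\mathrm{SYS}}\dot p_{\mathrm{AR}}^{\mathrm{SYS}}=Q_{\mathrm{AV}}-Q_{\mathrm{AR}}^{\mathrm{SYS}}$, $C_{\mathrm{VEN}}^{\mathrm{SYS}}\dot p_{\mathrm{VEN}}^{\mathrm{SYS}}=Q_{\mathrm{AR}}^{\mathrm{SYS}}-Q_{\mathrm{VEN}}^{\mathrm{SYS}}$, $C_{\mathrm{AR}}^{\mathrm{PUL}}\dot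 p_{\mathrm{AR}}^{\mathrm{PUL}}=Q_{\mathrm{PV}}-Q_{\mathrm{AR}}^{\mathrm{PUL}}$, $C_{\mathrm{VEN}}^{\mathrm{PUL}}\dot p_{\mathrm{VEN}}^{\mathrm{PUL}}=Q_{\mathrm{AR}}^{\mathrm{PUL}}-Q_{\mathrm{VEN}}^{\mathrm{PUL}}$. (iii) Inductance equations: $\frac{L_{\mathrm{AR}}^{\mathrm{SYS}}}{R_{\mathrm{AR}}^{\mathrm{SYS}}}\dot Q_{\mathrm{AR}}^{\mathrm{SYS}}=-Q_{\mathrm{AR}}^{\mathrm{SYS}}-\frac{p_{\mathrm{VEN}}^{\mathrm{SYS}}-p_{\mathrm{AR}}^{\mathrm{SYS}}}{R_{\mathrm{AR}}^{\mathrm{SYS}}}$, $\frac{L_{\mathrm{VEN}}^{\mathrm{SYS}}}{R_{\mathrm{VEN}}^{\mathrm{SYS}}}\dot Q_{\mathrm{VEN}}^{\mathrm{SYS}}=-Q_{\mathrm{VEN}}^{\mathrm{SYS}}-\frac{p_{\mathrm{RA}}-p_{\mathrm{VEN}}^{\mathrm{SYS}}}{R_{\mathrm{VEN}}^{\mathrm{SYS}}}$, $\frac{L_{\mathrm{AR}}^{\mathrm{PUL}}}{R_{\mathrm{AR}}^{\mathrm{PUL}}}\dot Q_{\mathrm{AR}}^{\mathrm{PUL}}=-Q_{\mathrm{AR}}^{\mathrm{PUL}}-\frac{p_{\mathrm{VEN}}^{\mathrm{PUL}}-p_{\mathrm{AR}}^{\mathrm{PUL}}}{R_{\mathrm{AR}}^{\mathrm{PUL}}}$,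 $\frac{L_{\mathrm{VEN}}^{\mathrm{PUL}}}{R_{\mathrm{VEN}}^{\mathrm{PUL}}}\dot Q_{\mathrm{VEN}}^{\mathrm{PUL}}=-Q_{\mathrm{VEN}}^{\mathrm{PUL}}-\frac{p_{\mathrm{LA}}-p_{\mathrm{VEN}}^{\mathrm{PUL}}}{R_{\mathrm{VEN}}^{\mathrm{PUL}}}$. Energies and powers: $\mathcal{M}=\sum_i\mathcal{E}_i+\sum_{j,k}(\mathcal{E}_j^k+\mathcal{K}_j^k)$ with $\mathcal{E}_i=\tfrac12E_i^{\mathrm{pass}}(V_i-V_{0,i})^2$, $\mathcal{E}_j^k=\tfrac12C_j^k(p_j^k)^2$, $\mathcal{K}_j^k=\tfrac12L_j^k(Q_j^k)^2$. $\Pi^{\mathrm{act}}=\sum_i\Pi_i^{\mathrm{act}}$ with $\Pi_i^{\mathrm{act}}=-E_i^{\mathrm{act}}(V_i-V_{0,i})\dot V_i$. $\Pi^{\mathrm{ex}}=\sum_i(-p_{\mathrm{EX}}\dot V_i)$. $\Pi^{\mathrm{diss}}=\Pi_{\mathrm{MV}}+\Pi_{\mathrm{AV}}+\Pi_{\mathrm{TV}}+\Pi_{\mathrm{PV}}+\sum_{j,k}\Pi_j^k$, with $\Pi_j^k=-R_j^k(Q_j^k)^2$, $\Pi_{\mathrm{MV}}=-\frac{(p_{\mathrm{LA}}-p_{\mathrm{LV}})^2}{R_{\mathrm{MV}}(p_{\mathrm{LA}},p_{\mathrm{LV}})}$, $\Pi_{\mathrm{AV}}=-\frac{(p_{\mathrm{LV}}-p_{\mathrm{AR}}^{\mathrm{SYS}})^2}{R_{\mathrm{AV}}(p_{\mathrm{LV}},p_{\mathrm{AR}}^{\mathrm{SYS}})}$,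 $\Pi_{\mathrm{TV}}=-\frac{(p_{\mathrm{RA}}-p_{\mathrm{RV}})^2}{R_{\mathrm{TV}}(p_{\mathrm{RA}},p_{\mathrm{RV}})}$, $\Pi_{\mathrm{PV}}=-\frac{(p_{\mathrm{RV}}-p_{\mathrm{AR}}^{\mathrm{PUL}})^2}{R_{\mathrm{PV}}(p_{\mathrm{RV}},p_{\mathrm{AR}}^{\mathrm{PUL}})}$. *)

theory Defs
  imports "HOL-Analysis.Analysis"
begin

datatype chamber = LA | LV | RA | RV
datatype comp = AR | VEN
datatype circ = SYS | PUL
datatype valve = MV | AV | TV | PV

definition chambers :: "chamber set" where
  "chambers = {LA, LV, RA, RV}"

definition Rvalve :: "real \<Rightarrow> real \<Rightarrow> real \<Rightarrow> real \<Rightarrow> real" where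
  "Rvalve Rmin Rmax p1 p2 = (if p1 < p2 then Rmin else Rmax)"

definition M_energy ::
  "(chamber \<Rightarrow> real) \<Rightarrow> (chamber \<Rightarrow> real) \<Rightarrow> (comp \<Rightarrow> circ \<Rightarrow> real) \<Rightarrow> (comp \<Rightarrow> circ \<Rightarrow> real)
   \<Rightarrow> (chamber \<Rightarrow> real \<Rightarrow> real) \<Rightarrow> (comp \<Rightarrow> circ \<Rightarrow> real \<Rightarrow> real) \<Rightarrow> (comp \<Rightarrow> circ \<Rightarrow> real \<Rightarrow> real)
   \<Rightarrow> real \<Rightarrow> real" where
  "M_energy Epass V0 C L V p Q t =
     (\<Sum>i\<in>chambers. 1/2 * Epass i * (V i t - V0 i)^2)
   + (\<Sum>j\<in>{AR, VEN}. \<Sum>k\<in>{SYS, PUL}. 1/2 * C j k * (p j k t)^2 + 1/2 * L j k * (Q j k t)^2)"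

definition Pi_act ::
  "(chamber \<Rightarrow> real \<Rightarrow> real) \<Rightarrow> (chamber \<Rightarrow> real) \<Rightarrow> (chamber \<Rightarrow> real \<Rightarrow> real) \<Rightarrow> real \<Rightarrow> real" where
  "Pi_act Eact V0 V t = (\<Sum>i\<in>chambers. - (Eact i t * (V i t - V0 i) * deriv (V i) t))"

definition Pi_ex :: "(real \<Rightarrow> real) \<Rightarrow> (chamber \<Rightarrow> real \<Rightarrow> real) \<Rightarrow> real \<Rightarrow> real" where
  "Pi_ex pEX V t = (\<Sum>i\<in>chambers. - (pEX t * deriv (V i) t))"

text \<open>Dissipated power Pi^diss(t); pch are the chamber pressures p_i.\<close>
definition Pi_diss ::
  "real \<Rightarrow> real \<Rightarrow> (comp \<Rightarrow> circ \<Rightarrow> real) \<Rightarrow> (chamber \<Rightarrow> real \<Rightarrow> real)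
   \<Rightarrow> (comp \<Rightarrow> circ \<Rightarrow> real \<Rightarrow> real) \<Rightarrow> (comp \<Rightarrow> circ \<Rightarrow> real \<Rightarrow> real) \<Rightarrow> real \<Rightarrow> real" where
  "Pi_diss Rmin Rmax R pch p Q t =
     - ((pch LA t - pch LV t)^2 / Rvalve Rmin Rmax (pch LA t) (pch LV t))
     - ((pch LV t - p AR SYS t)^2 / Rvalve Rmin Rmax (pch LV t) (p AR SYS t))
     - ((pch RA t - pch RV t)^2 / Rvalve Rmin Rmax (pch RA t) (pch RV t))
     - ((pch RV t - p AR PUL t)^2 / Rvalve Rmin Rmax (pch RV t) (p AR PUL t))
     + (\<Sum>j\<in>{AR, VEN}. \<Sum>k\<in>{SYS, PUL}. - (R j k * (Q j k t)^2))"

end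

theory Submission
  imports Defs
begin

lemma qlem: "(r::real) > 0 \<Longrightarrow> l / r * d = -q - x / r \<Longrightarrow> l * d = - r*q - x"
  by (simp add: field_simps)

theorem proposition1:
  fixes T Rmin Rmax :: real
    and C R L :: "comp \<Rightarrow> circ \<Rightarrow> real"
    and V0 Epass :: "chamber \<Rightarrow> real"
    and Eact :: "chamber \<Rightarrow> real \<Rightarrow> real"
    and pEX :: "real \<Rightarrow> real"
    and V pch :: "chamber \<Rightarrow> real \<Rightarrow> real"
    and p Q :: "comp \<Rightarrow> circ \<Rightarrow> real \<Rightarrow> real"
    and Qv :: "valve \<Rightarrow> real \<Rightarrow> real"
  assumes C_pos: "\<forall>j k. C j k > 0" and R_pos: "\<forall>j k. R j k > 0" and L_pos: "\<forall>j k. L j k > 0"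
    and Epass_pos: "\<forall>i. Epass i > 0"
    and Rmin_pos: "0 < Rmin" and Rmax_pos: "0 < Rmax"
    and diff: "\<forall>t\<in>{0<..<T}. (\<forall>i. V i differentiable (at t))
                  \<and> (\<forall>j k. p j k differentiable (at t) \<and> Q j k differentiable (at t))"
    and p_ch: "\<forall>t\<in>{0<..<T}. \<forall>i. pch i t = pEX t + (Epass i + Eact i t) * (V i t - V0 i)"
    and Q_MV: "\<forall>t\<in>{0<..<T}. Qv MV t = (pch LA t - pch LV t) / Rvalve Rmin Rmax (pch LA t) (pch LV t)"
    and Q_AV: "\<forall>t\<in>{0<..<T}. Qv AV t = (pch LV t - p AR SYS t) / Rvalve Rmin Rmax (pch LV t) (p AR SYS t)"
    and Q_TV: "\<forall>t\<in>{0<..<T}. Qv TV t = (pch RA t - pch RV t) / Rvalve Rmin Rmax (pch RA t) (pch RV t)"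
    and Q_PV: "\<forall>t\<in>{0<..<T}. Qv PV t = (pch RV t - p AR PUL t) / Rvalve Rmin Rmax (pch RV t) (p AR PUL t)"
    and dV_LA: "\<forall>t\<in>{0<..<T}. deriv (V LA) t = Q VEN PUL t - Qv MV t"
    and dV_LV: "\<forall>t\<in>{0<..<T}. deriv (V LV) t = Qv MV t - Qv AV t"
    and dV_RA: "\<forall>t\<in>{0<..<T}. deriv (V RA) t = Q VEN SYS t - Qv TV t"
    and dV_RV: "\<forall>t\<in>{0<..<T}. deriv (V RV) t = Qv TV t - Qv PV t"
    and dp_ARS: "\<forall>t\<in>{0<..<T}. C AR SYS * deriv (p AR SYS) t = Qv AV t - Q AR SYS t"
    and dp_VENS: "\<forall>t\<in>{0<..<T}. C VEN SYS * deriv (p VEN SYS) t = Q AR SYS t - Q VEN SYS t"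
    and dp_ARP: "\<forall>t\<in>{0<..<T}. C AR PUL * deriv (p AR PUL) t = Qv PV t - Q AR PUL t"
    and dp_VENP: "\<forall>t\<in>{0<..<T}. C VEN PUL * deriv (p VEN PUL) t = Q AR PUL t - Q VEN PUL t"
    and dQ_ARS: "\<forall>t\<in>{0<..<T}. L AR SYS / R AR SYS * deriv (Q AR SYS) t
                   = - Q AR SYS t - (p VEN SYS t - p AR SYS t) / R AR SYS"
    and dQ_VENS: "\<forall>t\<in>{0<..<T}. L VEN SYS / R VEN SYS * deriv (Q VEN SYS) t
                   = - Q VEN SYS t - (pch RA t - p VEN SYS t) / R VEN SYS"
    and dQ_ARP: "\<forall>t\<in>{0<..<T}. L AR PUL / R AR PUL * deriv (Q AR PUL) t
                   = - Q AR PUL t - (p VEN PUL t - p AR PUL t) / R AR PUL"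
    and dQ_VENP: "\<forall>t\<in>{0<..<T}. L VEN PUL / R VEN PUL * deriv (Q VEN PUL) t
                   = - Q VEN PUL t - (pch LA t - p VEN PUL t) / R VEN PUL"
  shows "\<forall>t\<in>{0<..<T}.
           ((\<lambda>s. M_energy Epass V0 C L V p Q s) has_real_derivative
              (Pi_act Eact V0 V t + Pi_diss Rmin Rmax R pch p Q t + Pi_ex pEX V t)) (at t)"
proof
  fix t assume t: "t \<in> {0<..<T}"
  have dV: "\<And>i. (V i has_real_derivative deriv (V i) t) (at t)"
    using diff t by (simp add: DERIV_deriv_iff_real_differentiable)
  have dp: "\<And>j k. (p j k has_real_derivative deriv (p j k) t) (at t)"
    using diff t by (simp add: DERIV_deriv_iff_real_differentiable)
  have dQ: "\<And>j k. (Q j k has_real_derivative deriv (Q j k) t) (at t)"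
    using diff t by (simp add: DERIV_deriv_iff_real_differentiable)
  have D: "((\<lambda>s. M_energy Epass V0 C L V p Q s) has_real_derivative
     ((\<Sum>i\<in>chambers. Epass i * (V i t - V0 i) * deriv (V i) t)
   + (\<Sum>j\<in>{AR, VEN}. \<Sum>k\<in>{SYS, PUL}. C j k * p j k t * deriv (p j k) t + L j k * Q j k t * deriv (Q j k) t))) (at t)"
    unfolding M_energy_def
    apply (rule derivative_eq_intros refl dV dp dQ)+
    apply (simp_all add: sum.distrib)
    apply (rule sum.cong, simp_all)
    done
  have RR: "\<And>a b. Rvalve Rmin Rmax a b > 0" using Rmin_pos Rmax_pos by (simp add: Rvalve_def)
  have v1: "Qv MV t * (pch LA t - pch LV t) = (pch LA t - pch LV t)^2 / Rvalve Rmin Rmax (pch LA t) (pch LV t)"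
    using Q_MV t by (simp add: power2_eq_square)
  have v2: "Qv AV t * (pch LV t - p AR SYS t) = (pch LV t - p AR SYS t)^2 / Rvalve Rmin Rmax (pch LV t) (p AR SYS t)"
    using Q_AV t by (simp add: power2_eq_square)
  have v3: "Qv TV t * (pch RA t - pch RV t) = (pch RA t - pch RV t)^2 / Rvalve Rmin Rmax (pch RA t) (pch RV t)"
    using Q_TV t by (simp add: power2_eq_square)
  have v4: "Qv PV t * (pch RV t - p AR PUL t) = (pch RV t - p AR PUL t)^2 / Rvalve Rmin Rmax (pch RV t) (p AR PUL t)"
    using Q_PV t by (simp add: power2_eq_square)
  have q1: "L AR SYS * deriv (Q AR SYS) t = - R AR SYS * Q AR SYS t - (p VEN SYS t - p AR SYS t)"
    using dQ_ARS t R_pos by (intro qlem) (simp_all add: R_pos)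
  have q2: "L VEN SYS * deriv (Q VEN SYS) t = - R VEN SYS * Q VEN SYS t - (pch RA t - p VEN SYS t)"
    using dQ_VENS t R_pos by (intro qlem) (simp_all add: R_pos)
  have q3: "L AR PUL * deriv (Q AR PUL) t = - R AR PUL * Q AR PUL t - (p VEN PUL t - p AR PUL t)"
    using dQ_ARP t R_pos by (intro qlem) (simp_all add: R_pos)
  have q4: "L VEN PUL * deriv (Q VEN PUL) t = - R VEN PUL * Q VEN PUL t - (pch LA t - p VEN PUL t)"
    using dQ_VENP t R_pos by (intro qlem) (simp_all add: R_pos)
  have e: "\<And>i. Epass i * (V i t - V0 i) = pch i t - pEX t - Eact i t * (V i t - V0 i)"
    using p_ch t by (simp add: algebra_simps)
  show "((\<lambda>s. M_energy Epass V0 C L V p Q s) has_real_derivative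
              (Pi_act Eact V0 V t + Pi_diss Rmin Rmax R pch p Q t + Pi_ex pEX V t)) (at t)"
  proof (rule DERIV_cong[OF D])
    let ?P = "\<lambda>x. x"
    have A: "(\<Sum>i\<in>chambers. Epass i * (V i t - V0 i) * deriv (V i) t)
      = Pi_act Eact V0 V t + Pi_ex pEX V t + (\<Sum>i\<in>chambers. pch i t * deriv (V i) t)"
      proof -
        have pc: "\<And>i. pch i t = pEX t + (Epass i + Eact i t) * (V i t - V0 i)" using p_ch t by blast
        show ?thesis unfolding Pi_act_def Pi_ex_def chambers_def pc by (simp add: algebra_simps)
      qed
    have B: "(\<Sum>j\<in>{AR, VEN}. \<Sum>k\<in>{SYS, PUL}. C j k * p j k t * deriv (p j k) t + L j k * Q j k t * deriv (Q j k) t)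
       = p AR SYS t * (C AR SYS * deriv (p AR SYS) t) + p VEN SYS t * (C VEN SYS * deriv (p VEN SYS) t)
       + p AR PUL t * (C AR PUL * deriv (p AR PUL) t) + p VEN PUL t * (C VEN PUL * deriv (p VEN PUL) t)
       + Q AR SYS t * (L AR SYS * deriv (Q AR SYS) t) + Q VEN SYS t * (L VEN SYS * deriv (Q VEN SYS) t)
       + Q AR PUL t * (L AR PUL * deriv (Q AR PUL) t) + Q VEN PUL t * (L VEN PUL * deriv (Q VEN PUL) t)"
      by (simp add: algebra_simps)
    have Cc: "(\<Sum>i\<in>chambers. pch i t * deriv (V i) t) = pch LA t * deriv (V LA) t + pch LV t * deriv (V LV) t
       + pch RA t * deriv (V RA) t + pch RV t * deriv (V RV) t"
      unfolding chambers_def by simp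
    have Dd: "Pi_diss Rmin Rmax R pch p Q t = - (Qv MV t * (pch LA t - pch LV t)) - (Qv AV t * (pch LV t - p AR SYS t))
       - (Qv TV t * (pch RA t - pch RV t)) - (Qv PV t * (pch RV t - p AR PUL t))
       - R AR SYS * (Q AR SYS t)^2 - R VEN SYS * (Q VEN SYS t)^2 - R AR PUL * (Q AR PUL t)^2 - R VEN PUL * (Q VEN PUL t)^2"
      unfolding Pi_diss_def v1 v2 v3 v4 by simp
    show "(\<Sum>i\<in>chambers. Epass i * (V i t - V0 i) * deriv (V i) t)
   + (\<Sum>j\<in>{AR, VEN}. \<Sum>k\<in>{SYS, PUL}. C j k * p j k t * deriv (p j k) t + L j k * Q j k t * deriv (Q j k) t)
      = Pi_act Eact V0 V t + Pi_diss Rmin Rmax R pch p Q t + Pi_ex pEX V t"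
      unfolding A B Cc Dd q1 q2 q3 q4
        dV_LA[rule_format, OF t] dV_LV[rule_format, OF t] dV_RA[rule_format, OF t] dV_RV[rule_format, OF t]
        dp_ARS[rule_format, OF t] dp_VENS[rule_format, OF t] dp_ARP[rule_format, OF t] dp_VENP[rule_format, OF t]
      by (simp add: algebra_simps power2_eq_square)
  qed
qed

end
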